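(* Let $m=p_1^{a_1}\cdots p_k^{a_k}$ be a positive integer. Then $$\mathbb{E}(\mathbb{X}(m))=\begin{cases}\prod_{j=1}^k(1-\delta_{p_j})=\prod_{\substack{p\equiv1\bmod3\\ p\mid m}}\frac{p}{p+2}&\text{if } m \text{ is a cube},\\ 0&\text{otherwise}.\end{cases}$$ Furthermore, $\sum_{m=1}^\infty\mathbb{E}\left(\frac{\mathbb{X}(m)}{m}\right)\le\zeta(3)$ and $\sum_{m=1}^\infty\mathrm{Var}\left(\frac{\mathbb{X}(m)}{m}\right)\le\zeta(6)$.
   Context: The $\mathbb{X}(p)$, $p$ prime, are independent random variables, with $\mathbb{X}(p)=0$ with probability $\delta_p$ and $\mathbb{X}(p)$ equal to each of $1,\omega_3,\omega_3^2$ ($\omega_3=e^{2\pi i/3}$) with probability $\frac{1-\delta_p}{3}$, where $\delta_p=0$ if $p\equiv2\pmod3$ or $p=3$, and $\delta_p=\frac{2}{p+2}$ if $p\equiv1\pmod3$. $\mathbb{X}$ is extended completely multiplicatively: $\mathbb{X}(p_1^{a_1}\cdots p_k^{a_k})=\mathbb{X}(p_1)^{a_1}\cdots\mathbb{X}(p_k)^{a_k}$. *)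

theory Defs
  imports "HOL-Probability.Probability" "HOL-Computational_Algebra.Primes"
begin

definition omega3 :: complex where
  "omega3 = cis (2 * pi / 3)"

definition delta :: "nat \<Rightarrow> real" where
  "delta p = (if p mod 3 = 1 then 2 / (real p + 2) else 0)"

definition mult_ext :: "(nat \<Rightarrow> 'a \<Rightarrow> complex) \<Rightarrow> nat \<Rightarrow> 'a \<Rightarrow> complex" where
  "mult_ext X m \<omega> = (\<Prod>p\<in>prime_factors m. X p \<omega> ^ multiplicity p m)"

definition cvariance :: "'a measure \<Rightarrow> ('a \<Rightarrow> complex) \<Rightarrow> real" where
  "cvariance M Z = (\<integral>\<omega>. (cmod (Z \<omega> - (\<integral>\<eta>. Z \<eta> \<partial>M)))\<^sup>2 \<partial>M)"

definition zeta3 :: real where "zeta3 = (\<Sum>n. 1 / (real (Suc n)) ^ 3)"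
definition zeta6 :: real where "zeta6 = (\<Sum>n. 1 / (real (Suc n)) ^ 6)"

end

theory Submission imports Defs "HOL-Computational_Algebra.Nth_Powers" begin
lemma om: "omega3 = Complex (-1/2) (sqrt 3/2)"
proof -
  have e: "2*pi/3 = pi - pi/3" by simp
  have c: "cos (2*pi/3) = -1/2" unfolding e cos_pi_minus cos_60 by simp
  have s: "sin (2*pi/3) = sqrt 3/2" unfolding e sin_pi_minus sin_60 by simp
  show ?thesis unfolding omega3_def cis.code using c s by simp
qed
lemma om2: "omega3^2 = Complex (-1/2) (-sqrt 3/2)"
  unfolding om power2_eq_square by (simp add: Complex_eq field_simps flip: of_real_mult)
lemma om3: "omega3^3 = 1"
proof -
  have "omega3^3 = omega3^2 * omega3" by (simp add: power2_eq_square power3_eq_cube)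
  also have "\<dots> = Complex (-1/2) (-sqrt 3/2) * Complex (-1/2) (sqrt 3/2)" by (subst om2) (simp add: om)
  also have "\<dots> = 1" by (simp add: complex_eq_iff algebra_simps)
  finally show ?thesis .
qed
lemma om_ne: "omega3 \<noteq> 0" "omega3 \<noteq> 1" "omega3^2 \<noteq> 0" "omega3^2 \<noteq> 1" "omega3^2 \<noteq> omega3" "1 + omega3 + omega3^2 = 0"
  unfolding om2 unfolding om by (simp_all add: complex_eq_iff)
lemma om_ne': "0 \<noteq> omega3" "1 \<noteq> omega3" "0 \<noteq> omega3^2" "1 \<noteq> omega3^2" "omega3 \<noteq> omega3^2"
  using om_ne by metis+

lemma om_pow_mod: "omega3 ^ a = omega3 ^ (a mod 3)"
proof -
  have "omega3 ^ a = (omega3^3) ^ (a div 3) * omega3 ^ (a mod 3)"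
    by (metis div_mult_mod_eq power_add power_mult mult.commute)
  then show ?thesis by (simp add: om3)
qed

lemma roots_sum: "1 + omega3 ^ a + (omega3^2) ^ a = (if 3 dvd a then 3 else 0)"
proof -
  have "omega3^4 = omega3^3 * omega3" by (simp add: eval_nat_numeral)
  then have o4: "omega3^4 = omega3" using om3 by simp
  have e: "(omega3^2)^a = (omega3^a)^2" by (simp flip: power_mult add: mult.commute)
  have "a mod 3 = 0 \<or> a mod 3 = 1 \<or> a mod 3 = 2" by arith
  then show ?thesis
  proof (elim disjE)
    assume h: "a mod 3 = 0"
    then have "omega3^a = 1" using om_pow_mod[of a] by simp
    then show ?thesis unfolding e using h by (simp add: dvd_eq_mod_eq_0)
  next
    assume h: "a mod 3 = 1"
    then have "omega3^a = omega3" using om_pow_mod[of a] by simp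
    then show ?thesis unfolding e using h om_ne(6) by (simp add: dvd_eq_mod_eq_0)
  next
    assume h: "a mod 3 = 2"
    then have ha: "omega3^a = omega3^2" using om_pow_mod[of a] by simp
    have "1 + omega3 ^ a + (omega3^a)^2 = 1 + omega3^2 + omega3^4"
      unfolding ha by (simp flip: power_mult)
    also have "\<dots> = 0" using o4 om_ne(6) by (simp add: add_ac)
    finally show ?thesis unfolding e using h by (simp add: dvd_eq_mod_eq_0)
  qed
qed

definition Vset :: "complex set" where "Vset = {0, 1, omega3, omega3^2}"

lemma finite_Vset[simp]: "finite Vset" by (simp add: Vset_def)

lemma sum_Vset: "(\<Sum>v\<in>Vset. f v) = f 0 + f 1 + f omega3 + f (omega3^2)"
  unfolding Vset_def using om_ne om_ne' by (simp add: add_ac)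

lemma delta_bounds: "0 \<le> delta p" "delta p \<le> 1"
  unfolding delta_def by auto

locale L4 = prob_space M for M :: "'a measure" +
  fixes X :: "nat \<Rightarrow> 'a \<Rightarrow> complex"
  assumes meas: "\<And>p. prime p \<Longrightarrow> X p \<in> borel_measurable M"
    and indep: "indep_vars (\<lambda>_. borel) X {p. prime p}"
    and dist0: "\<And>p. prime p \<Longrightarrow> measure M {\<omega>\<in>space M. X p \<omega> = 0} = delta p"
    and dist1: "\<And>p z. prime p \<Longrightarrow> z \<in> {1, omega3, omega3\<^sup>2} \<Longrightarrow>
                 measure M {\<omega>\<in>space M. X p \<omega> = z} = (1 - delta p) / 3"
begin

lemma ev: assumes "prime p" shows "{\<omega>\<in>space M. X p \<omega> = v} \<in> events"
proof -
  have [measurable]: "X p \<in> borel_measurable M" using meas assms .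
  show ?thesis by measurable
qed

lemma AE_V: assumes p: "prime p" shows "AE \<omega> in M. X p \<omega> \<in> Vset"
proof -
  have eq: "{\<omega>\<in>space M. X p \<omega> \<in> Vset} = (\<Union>v\<in>Vset. {\<omega>\<in>space M. X p \<omega> = v})" by auto
  have "prob (\<Union>v\<in>Vset. {\<omega>\<in>space M. X p \<omega> = v}) = (\<Sum>v\<in>Vset. prob {\<omega>\<in>space M. X p \<omega> = v})"
    by (rule finite_measure_finite_Union) (auto simp: ev[OF p] disjoint_family_on_def)
  also have "\<dots> = 1" unfolding sum_Vset
    using dist0[OF p] dist1[OF p, of 1] dist1[OF p, of omega3] dist1[OF p, of "omega3^2"] by simp
  finally have "prob {\<omega>\<in>space M. X p \<omega> \<in> Vset} = 1" unfolding eq .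
  from AE_prob_1[OF this] show ?thesis by auto
qed

lemma int_pow: assumes p: "prime p"
  shows "integrable M (\<lambda>\<omega>. X p \<omega> ^ a)"
    and "(\<integral>\<omega>. X p \<omega> ^ a \<partial>M) = (\<Sum>v\<in>Vset. v^a * of_real (prob {\<omega>\<in>space M. X p \<omega> = v}))"
proof -
  have [measurable]: "X p \<in> borel_measurable M" using meas p .
  define S where "S = (\<lambda>\<omega>. \<Sum>v\<in>Vset. indicator {\<omega>\<in>space M. X p \<omega> = v} \<omega> *\<^sub>R (v^a))"
  have Sm[measurable]: "S \<in> borel_measurable M" unfolding S_def by measurable
  have m1: "(\<lambda>\<omega>. X p \<omega> ^ a) \<in> borel_measurable M" by measurable
  have AE: "AE \<omega> in M. X p \<omega> ^ a = S \<omega>"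
    using AE_V[OF p] AE_space
  proof eventually_elim
    case (elim \<omega>)
    have "S \<omega> = (\<Sum>v\<in>Vset. if v = X p \<omega> then v^a else 0)"
      unfolding S_def
    proof (intro sum.cong refl)
      fix v assume "v \<in> Vset"
      show "indicator {\<omega>\<in>space M. X p \<omega> = v} \<omega> *\<^sub>R (v^a) = (if v = X p \<omega> then v^a else 0)"
        using elim(2) by (cases "v = X p \<omega>") (auto simp: indicator_def)
    qed
    also have "\<dots> = X p \<omega> ^ a" using elim(1) by (simp only: sum.delta finite_Vset if_True)
    finally show ?case by (rule sym)
  qed
  have iv: "integrable M (\<lambda>\<omega>. indicator {\<omega>\<in>space M. X p \<omega> = v} \<omega> *\<^sub>R (v^a))" for v
  proof (rule integrable_indicator)
    show "{\<omega>\<in>space M. X p \<omega> = v} \<in> sets M" using ev[OF p, of v] by simp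
    show "emeasure M {\<omega>\<in>space M. X p \<omega> = v} < \<infinity>"
      by (simp add: less_top[symmetric])
  qed
  have iS: "integrable M S" unfolding S_def by (rule Bochner_Integration.integrable_sum, rule iv)
  show "integrable M (\<lambda>\<omega>. X p \<omega> ^ a)"
    using iS by (subst integrable_cong_AE[OF m1 Sm AE])
  have "(\<integral>\<omega>. X p \<omega> ^ a \<partial>M) = integral\<^sup>L M S" by (rule integral_cong_AE[OF m1 Sm AE])
  also have "\<dots> = (\<Sum>v\<in>Vset. integral\<^sup>L M (\<lambda>\<omega>. indicator {\<omega>\<in>space M. X p \<omega> = v} \<omega> *\<^sub>R (v^a)))"
    unfolding S_def by (rule Bochner_Integration.integral_sum[OF iv])
  also have "\<dots> = (\<Sum>v\<in>Vset. v^a * of_real (prob {\<omega>\<in>space M. X p \<omega> = v}))"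
  proof (intro sum.cong refl)
    fix v
    have "integral\<^sup>L M (\<lambda>\<omega>. indicator {\<omega>\<in>space M. X p \<omega> = v} \<omega> *\<^sub>R (v^a))
        = integral\<^sup>L M (indicator {\<omega>\<in>space M. X p \<omega> = v}) *\<^sub>R (v^a)"
      by (rule integral_scaleR_left, rule integrable_real_indicator)
        (use ev[OF p, of v] in \<open>simp_all add: less_top[symmetric]\<close>)
    also have "integral\<^sup>L M (indicator {\<omega>\<in>space M. X p \<omega> = v}) = prob {\<omega>\<in>space M. X p \<omega> = v}"
      by (simp add: Int_absorb2 Collect_subset)
    finally show "integral\<^sup>L M (\<lambda>\<omega>. indicator {\<omega>\<in>space M. X p \<omega> = v} \<omega> *\<^sub>R (v^a))
        = v^a * of_real (prob {\<omega>\<in>space M. X p \<omega> = v})"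
      by (simp add: scaleR_conv_of_real)
  qed
  finally show "(\<integral>\<omega>. X p \<omega> ^ a \<partial>M) = (\<Sum>v\<in>Vset. v^a * of_real (prob {\<omega>\<in>space M. X p \<omega> = v}))" .
qed

lemma E_pow: assumes p: "prime p" and a: "a > 0"
  shows "(\<integral>\<omega>. X p \<omega> ^ a \<partial>M) = (if 3 dvd a then complex_of_real (1 - delta p) else 0)"
proof -
  have q1: "prob {\<omega>\<in>space M. X p \<omega> = 1} = (1 - delta p)/3" using dist1[OF p] by simp
  have q2: "prob {\<omega>\<in>space M. X p \<omega> = omega3} = (1 - delta p)/3" using dist1[OF p] by simp
  have q3: "prob {\<omega>\<in>space M. X p \<omega> = omega3^2} = (1 - delta p)/3" using dist1[OF p] by simp
  have "(\<integral>\<omega>. X p \<omega> ^ a \<partial>M) = complex_of_real ((1 - delta p)/3) * (1 + omega3 ^ a + (omega3^2) ^ a)"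
    unfolding int_pow(2)[OF p] sum_Vset dist0[OF p] q1 q2 q3 using a
    by (simp add: algebra_simps power_0_left)
  also have "\<dots> = (if 3 dvd a then complex_of_real (1 - delta p) else 0)"
    unfolding roots_sum by (auto simp: of_real_divide)
  finally show ?thesis .
qed

lemma E_mult: assumes m: "m > 0"
  shows "(\<integral>\<omega>. mult_ext X m \<omega> \<partial>M) = (\<Prod>p\<in>prime_factors m. \<integral>\<omega>. X p \<omega> ^ multiplicity p m \<partial>M)"
proof -
  have sub: "prime_factors m \<subseteq> {p. prime p}" by (auto intro: in_prime_factors_imp_prime)
  have ind: "indep_vars (\<lambda>_. borel) (\<lambda>p \<omega>. X p \<omega> ^ multiplicity p m) (prime_factors m)"
    by (rule indep_vars_compose2[OF indep_vars_subset[OF indep sub]]) measurable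
  show ?thesis unfolding mult_ext_def
    by (rule indep_vars_lebesgue_integral[OF _ ind]) (auto intro: int_pow(1) in_prime_factors_imp_prime)
qed

lemma cube_iff: assumes m: "(m::nat) > 0"
  shows "(\<exists>n. m = n ^ 3) \<longleftrightarrow> (\<forall>p\<in>prime_factors m. 3 dvd multiplicity p m)"
proof -
  have "(\<exists>n. m = n ^ 3) \<longleftrightarrow> is_nth_power 3 (normalize m)" by (simp add: is_nth_power_def)
  also have "\<dots> \<longleftrightarrow> (\<forall>p. prime p \<longrightarrow> 3 dvd multiplicity p m)" by (rule is_nth_power_conv_multiplicity) simp
  also have "\<dots> \<longleftrightarrow> (\<forall>p\<in>prime_factors m. 3 dvd multiplicity p m)"
    using m by (auto simp: in_prime_factors_iff not_dvd_imp_multiplicity_0)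
  finally show ?thesis .
qed

lemma E_main: assumes m: "(m::nat) > 0"
  shows "(\<integral>\<omega>. mult_ext X m \<omega> \<partial>M) = (if \<exists>n. m = n ^ 3
               then complex_of_real (\<Prod>p\<in>prime_factors m. 1 - delta p) else 0)"
proof -
  have pos: "multiplicity p m > 0" if "p \<in> prime_factors m" for p
    using that m by (simp add: prime_factors_multiplicity)
  have "(\<integral>\<omega>. mult_ext X m \<omega> \<partial>M) = (\<Prod>p\<in>prime_factors m. if 3 dvd multiplicity p m then complex_of_real (1 - delta p) else 0)"
    unfolding E_mult[OF m] by (intro prod.cong refl E_pow pos) (auto intro: in_prime_factors_imp_prime)
  then show ?thesis unfolding cube_iff[OF m] by (auto simp: of_real_prod intro!: prod_zero)
qed


lemma AE_all: "AE \<omega> in M. \<forall>p\<in>prime_factors m. X p \<omega> \<in> Vset"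
  by (rule AE_finite_allI) (auto intro: AE_V in_prime_factors_imp_prime)

lemma meas_mult[measurable]: "mult_ext X m \<in> borel_measurable M"
proof -
  have [measurable]: "X p \<in> borel_measurable M" if "p \<in> prime_factors m" for p
    using meas that by (auto intro: in_prime_factors_imp_prime)
  show ?thesis unfolding mult_ext_def by measurable
qed

lemma AE_norm: "AE \<omega> in M. norm (mult_ext X m \<omega>) \<le> 1"
  using AE_all[of m]
proof eventually_elim
  case (elim \<omega>)
  have "norm (mult_ext X m \<omega>) = (\<Prod>p\<in>prime_factors m. norm (X p \<omega>) ^ multiplicity p m)"
    unfolding mult_ext_def by (simp add: prod_norm[symmetric] norm_power)
  also have "\<dots> \<le> 1"
  proof (rule prod_le_1)
    fix p assume "p \<in> prime_factors m"
    then have "X p \<omega> \<in> Vset" using elim by auto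
    then have "norm (X p \<omega>) \<le> 1" by (auto simp: Vset_def omega3_def norm_power)
    then show "0 \<le> norm (X p \<omega>) ^ multiplicity p m \<and> norm (X p \<omega>) ^ multiplicity p m \<le> 1"
      by (simp add: power_le_one)
  qed
  finally show ?case .
qed

lemma Vset_cube: assumes "v \<in> Vset" "3 dvd a" shows "v ^ a = 0 \<or> v ^ a = 1"
proof -
  obtain k where k: "a = 3 * k" using assms(2) by blast
  have o6: "(omega3^2)^3 = 1" by (metis om3 power_mult mult.commute power_one)
  have "v ^ 3 = 0 \<or> v ^ 3 = 1" using assms(1) om3 o6 unfolding Vset_def by auto
  then show ?thesis unfolding k power_mult by (auto simp: power_0_left split: if_splits)
qed

lemma AE_cube: assumes m: "m > 0" "\<exists>n. m = n ^ 3"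
  shows "AE \<omega> in M. \<exists>r. mult_ext X m \<omega> = complex_of_real r \<and> 0 \<le> r \<and> r \<le> 1"
  using AE_all[of m]
proof eventually_elim
  case (elim \<omega>)
  have f: "X p \<omega> ^ multiplicity p m = 0 \<or> X p \<omega> ^ multiplicity p m = 1" if "p \<in> prime_factors m" for p
    using Vset_cube[of "X p \<omega>" "multiplicity p m"] elim that cube_iff[OF m(1)] m(2) by auto
  define r where "r = (\<Prod>p\<in>prime_factors m. Re (X p \<omega> ^ multiplicity p m))"
  have "mult_ext X m \<omega> = complex_of_real r"
    unfolding mult_ext_def r_def of_real_prod
  proof (intro prod.cong refl)
    fix p assume "p \<in> prime_factors m"
    then show "X p \<omega> ^ multiplicity p m = complex_of_real (Re (X p \<omega> ^ multiplicity p m))"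
      using f[of p] by auto
  qed
  moreover have f01: "0 \<le> Re (X p \<omega> ^ multiplicity p m) \<and> Re (X p \<omega> ^ multiplicity p m) \<le> 1"
    if "p \<in> prime_factors m" for p
    using f[OF that] by (auto simp: power_0_left)
  have "0 \<le> r" unfolding r_def by (rule prod_nonneg) (use f01 in blast)
  moreover have "r \<le> 1" unfolding r_def by (rule prod_le_1) (rule f01)
  ultimately show ?case by blast
qed

lemma var_bound: assumes m: "(m::nat) > 0"
  shows "cvariance M (\<lambda>\<omega>. mult_ext X m \<omega> / of_nat m) \<le> 1 / (real m)^2"
proof -
  define c where "c = (\<integral>\<eta>. mult_ext X m \<eta> / of_nat m \<partial>M)"
  have c: "c = (if \<exists>n. m = n ^ 3 then complex_of_real (\<Prod>p\<in>prime_factors m. 1 - delta p) else 0) / of_nat m"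
    unfolding c_def by (simp add: E_main[OF m])
  have AEb: "AE \<omega> in M. (cmod (mult_ext X m \<omega> / of_nat m - c))^2 \<le> 1 / (real m)^2"
  proof (cases "\<exists>n. m = n ^ 3")
    case True
    define P where "P = (\<Prod>p\<in>prime_factors m. 1 - delta p)"
    have P: "0 \<le> P" "P \<le> 1" unfolding P_def
      using delta_bounds by (auto intro!: prod_nonneg prod_le_1 simp: algebra_simps)
    have cc: "c = complex_of_real (P / real m)" using True c unfolding P_def by simp
    show ?thesis using AE_cube[OF m True]
    proof eventually_elim
      case (elim \<omega>)
      then obtain r where r: "mult_ext X m \<omega> = complex_of_real r" "0 \<le> r" "r \<le> 1" by blast
      have "mult_ext X m \<omega> / of_nat m - c = complex_of_real ((r - P) / real m)"
        unfolding r cc by (simp add: diff_divide_distrib)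
      then have "cmod (mult_ext X m \<omega> / of_nat m - c) = cmod (complex_of_real ((r - P) / real m))"
        by (rule arg_cong)
      also have "\<dots> = \<bar>r - P\<bar> / real m" by (simp only: norm_of_real abs_divide abs_of_nat)
      also have "\<dots> \<le> 1 / real m" using r P m by (intro divide_right_mono) auto
      finally have "cmod (mult_ext X m \<omega> / of_nat m - c) \<le> 1 / real m" .
      then have "(cmod (mult_ext X m \<omega> / of_nat m - c))^2 \<le> (1 / real m)^2"
        by (rule power_mono) simp
      then show ?case by (simp add: power_divide)
    qed
  next
    case False
    then have cc: "c = 0" using c by simp
    show ?thesis using AE_norm[of m]
    proof eventually_elim
      case (elim \<omega>)
      have "cmod (mult_ext X m \<omega> / of_nat m - c) = cmod (mult_ext X m \<omega>) / real m"
        unfolding cc by (simp add: norm_divide)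
      also have "\<dots> \<le> 1 / real m" using elim m by (intro divide_right_mono) auto
      finally have "cmod (mult_ext X m \<omega> / of_nat m - c) \<le> 1 / real m" .
      then have "(cmod (mult_ext X m \<omega> / of_nat m - c))^2 \<le> (1 / real m)^2"
        by (rule power_mono) simp
      then show ?case by (simp add: power_divide)
    qed
  qed
  have "cvariance M (\<lambda>\<omega>. mult_ext X m \<omega> / of_nat m) = (\<integral>\<omega>. (cmod (mult_ext X m \<omega> / of_nat m - c))^2 \<partial>M)"
    unfolding cvariance_def c_def ..
  also have "\<dots> \<le> (\<integral>\<omega>. 1 / (real m)^2 \<partial>M)"
    by (rule integral_mono_AE'[OF _ AEb]) auto
  also have "\<dots> = 1 / (real m)^2" by (simp add: prob_space)
  finally show ?thesis .
qed

lemma var_nonneg: "0 \<le> cvariance M Z"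
  unfolding cvariance_def by (rule integral_nonneg_AE) auto

lemma var_one: "cvariance M (\<lambda>\<omega>. mult_ext X 1 \<omega> / of_nat 1) = 0"
  unfolding cvariance_def mult_ext_def by (simp add: prob_space)


end

lemma zeta_summable: assumes "k \<ge> 2" shows "summable (\<lambda>n. 1 / real (Suc n) ^ k)"
proof -
  have "summable (\<lambda>n. inverse (real n ^ k))" by (rule inverse_power_summable) (use assms in auto)
  then have "summable (\<lambda>n. inverse (real (Suc n) ^ k))" by (subst summable_Suc_iff)
  then show ?thesis by (simp add: inverse_eq_divide)
qed

lemma zeta6_ge: "1 \<le> zeta6"
proof -
  have "sum (\<lambda>n. 1 / real (Suc n) ^ 6) {0} \<le> (\<Sum>n. 1 / real (Suc n) ^ 6)"
    by (rule sum_le_suminf[OF zeta_summable]) auto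
  then show ?thesis unfolding zeta6_def by simp
qed

lemma tele_sums: "(\<lambda>n. if n = 0 then 0 else 1 / real n - 1 / real (Suc n)) sums 1"
proof -
  have lim: "(\<lambda>n. 1 / real (Suc n)) \<longlonglongrightarrow> 0"
    using LIMSEQ_inverse_real_of_nat by (simp add: inverse_eq_divide)
  have "(\<lambda>n. 1 / real (Suc n) - 1 / real (Suc (Suc n))) sums (1 / real (Suc 0) - 0)"
    by (rule telescope_sums'[OF lim])
  then have "(\<lambda>n. (\<lambda>n. if n = 0 then 0 else 1 / real n - 1 / real (Suc n)) (Suc n)) sums 1" by simp
  then show ?thesis by (subst (asm) sums_Suc_iff) simp
qed

lemma sq_le_tele: assumes "n > 0" shows "1 / (real (Suc n))^2 \<le> 1 / real n - 1 / real (Suc n)"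
proof -
  have le: "real n * real (Suc n) \<le> real (Suc n)^2" by (simp add: power2_eq_square)
  have pos: "0 < real n * real (Suc n)" using assms by simp
  have "1 / real (Suc n)^2 \<le> 1 / (real n * real (Suc n))"
    by (rule divide_left_mono[OF le]) (use pos in auto)
  also have "\<dots> = 1 / real n - 1 / real (Suc n)" using assms by (simp add: field_simps)
  finally show ?thesis .
qed

theorem lemma4p2:
  fixes M :: "'a measure" and X :: "nat \<Rightarrow> 'a \<Rightarrow> complex"
  assumes prob: "prob_space M"
    and meas: "\<And>p. prime p \<Longrightarrow> X p \<in> borel_measurable M"
    and indep: "prob_space.indep_vars M (\<lambda>_. borel) X {p. prime p}"
    and dist0: "\<And>p. prime p \<Longrightarrow> measure M {\<omega>\<in>space M. X p \<omega> = 0} = delta p"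
    and dist1: "\<And>p z. prime p \<Longrightarrow> z \<in> {1, omega3, omega3\<^sup>2} \<Longrightarrow>
                 measure M {\<omega>\<in>space M. X p \<omega> = z} = (1 - delta p) / 3"
  shows "(\<forall>m::nat. m > 0 \<longrightarrow>
            (\<integral>\<omega>. mult_ext X m \<omega> \<partial>M) =
              (if \<exists>n. m = n ^ 3
               then complex_of_real (\<Prod>p\<in>prime_factors m. 1 - delta p)
               else 0)
          \<and> ((\<exists>n. m = n ^ 3) \<longrightarrow>
              (\<Prod>p\<in>prime_factors m. 1 - delta p) =
              (\<Prod>p\<in>{p\<in>prime_factors m. p mod 3 = 1}. real p / (real p + 2))))
       \<and> (\<exists>s::real. (\<lambda>n. \<integral>\<omega>. mult_ext X (Suc n) \<omega> / of_nat (Suc n) \<partial>M) sums complex_of_real s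
                    \<and> s \<le> zeta3)
       \<and> summable (\<lambda>n. cvariance M (\<lambda>\<omega>. mult_ext X (Suc n) \<omega> / of_nat (Suc n)))
       \<and> (\<Sum>n. cvariance M (\<lambda>\<omega>. mult_ext X (Suc n) \<omega> / of_nat (Suc n))) \<le> zeta6"
proof -
  interpret L: L4 M X
    by (rule L4.intro[OF prob], unfold_locales) (use meas indep dist0 dist1 in auto)
  have P1: "(\<Prod>p\<in>prime_factors m. 1 - delta p) =
              (\<Prod>p\<in>{p\<in>prime_factors m. p mod 3 = 1}. real p / (real p + 2))" for m :: nat
  proof -
    have "(\<Prod>p\<in>{p\<in>prime_factors m. p mod 3 = 1}. real p / (real p + 2))
        = (\<Prod>p\<in>prime_factors m. if p mod 3 = 1 then real p / (real p + 2) else 1)"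
      by (rule prod.inter_filter) simp
    also have "\<dots> = (\<Prod>p\<in>prime_factors m. 1 - delta p)"
    proof (intro prod.cong refl)
      fix p :: nat
      have ne: "real p + 2 \<noteq> 0" by simp
      have "real p / (real p + 2) = ((real p + 2) - 2) / (real p + 2)" by simp
      also have "\<dots> = 1 - 2 / (real p + 2)" using ne by (simp only: diff_divide_distrib divide_self_if if_False)
      finally show "(if p mod 3 = 1 then real p / (real p + 2) else 1) = 1 - delta p"
        unfolding delta_def by simp
    qed
    finally show ?thesis by simp
  qed
  define P where "P m = (\<Prod>p\<in>prime_factors m. 1 - delta p)" for m :: nat
  have P01: "0 \<le> P m" "P m \<le> 1" for m unfolding P_def
    using delta_bounds by (auto intro!: prod_nonneg prod_le_1 simp: algebra_simps)
  define r where "r n = (if \<exists>k. Suc n = k ^ 3 then P (Suc n) / real (Suc n) else 0)" for n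
  have e: "(\<integral>\<omega>. mult_ext X (Suc n) \<omega> / of_nat (Suc n) \<partial>M) = complex_of_real (r n)" for n
    unfolding r_def P_def by (simp add: L.E_main del: of_nat_Suc)
  define g where "g k = (Suc k) ^ 3 - 1" for k
  have gS: "Suc (g k) = (Suc k) ^ 3" for k unfolding g_def by simp
  have sm: "strict_mono g"
  proof (rule strict_monoI)
    fix a b :: nat assume "a < b"
    then have "(Suc a) ^ 3 < (Suc b) ^ 3" by (intro power_strict_mono) auto
    then show "g a < g b" using gS[of a] gS[of b] by simp
  qed
  have zero: "r n = 0" if "n \<notin> range g" for n
  proof (rule ccontr)
    assume "r n \<noteq> 0"
    then obtain k where k: "Suc n = k ^ 3" unfolding r_def by (auto split: if_splits)
    then obtain j where j: "k = Suc j" by (cases k) auto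
    then have "n = g j" using k gS[of j] by simp
    then show False using that by auto
  qed
  have rg: "r (g k) = P ((Suc k)^3) / real ((Suc k)^3)" for k
    unfolding r_def gS by auto
  have rg_le: "norm (r (g k)) \<le> 1 / real (Suc k) ^ 3" for k
    unfolding rg using P01[of "(Suc k)^3"] by (simp add: divide_right_mono del: of_nat_Suc)
  have summ: "summable (\<lambda>k. r (g k))"
    by (rule summable_comparison_test'[OF zeta_summable[of 3] rg_le]) auto
  define s where "s = (\<Sum>k. r (g k))"
  have "(\<lambda>k. r (g k)) sums s" unfolding s_def using summ by (rule summable_sums)
  then have rs: "r sums s" using sums_mono_reindex[of g r s, OF sm zero] by blast
  have z3: "summable (\<lambda>n. 1 / real (Suc n) ^ 3)" by (rule zeta_summable) simp
  have s_le: "s \<le> zeta3" unfolding s_def zeta3_def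
    by (rule suminf_le[OF _ summ z3]) (rule order.trans[OF _ rg_le], simp)
  have part2: "\<exists>s::real. (\<lambda>n. \<integral>\<omega>. mult_ext X (Suc n) \<omega> / of_nat (Suc n) \<partial>M) sums complex_of_real s
                    \<and> s \<le> zeta3"
    unfolding e using sums_of_real[OF rs] s_le by blast
  define v where "v n = cvariance M (\<lambda>\<omega>. mult_ext X (Suc n) \<omega> / of_nat (Suc n))" for n
  define t where "t n = (if n = 0 then 0 else 1 / real n - 1 / real (Suc n))" for n
  have vt: "norm (v n) \<le> t n" for n
  proof (cases "n = 0")
    case True
    then show ?thesis unfolding v_def t_def using L.var_one by simp
  next
    case False
    have "norm (v n) = v n" unfolding v_def using L.var_nonneg by simp
    also have "\<dots> \<le> 1 / (real (Suc n))^2" unfolding v_def using L.var_bound[of "Suc n"] by simp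
    also have "\<dots> \<le> t n" unfolding t_def using sq_le_tele[of n] False by simp
    finally show ?thesis .
  qed
  have ts: "t sums 1" unfolding t_def by (rule tele_sums)
  have vs: "summable v" by (rule summable_comparison_test'[OF sums_summable[OF ts] vt])
  have "suminf v \<le> suminf t"
    by (rule suminf_le[OF _ vs sums_summable[OF ts]]) (rule order.trans[OF _ vt], simp)
  also have "\<dots> = 1" using ts sums_unique by metis
  also have "\<dots> \<le> zeta6" by (rule zeta6_ge)
  finally have part3: "suminf v \<le> zeta6" .
  have vs': "summable (\<lambda>n. cvariance M (\<lambda>\<omega>. mult_ext X (Suc n) \<omega> / of_nat (Suc n)))"
    using vs unfolding v_def .
  have part3': "(\<Sum>n. cvariance M (\<lambda>\<omega>. mult_ext X (Suc n) \<omega> / of_nat (Suc n))) \<le> zeta6"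
    using part3 unfolding v_def .
  show ?thesis
    by (intro conjI allI impI L.E_main P1 part2 vs' part3')
qed

end
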